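(* Let $\rho_0,\rho_1\in\mathcal{P}(\mathbb{R}^n)\cap L^\infty(\mathbb{R}^n)$ be radially symmetric about the origin, strictly radially decreasing and $C^2$ in the interior of their supports, with $\Delta\rho_0(0)<0$ and $\Delta\rho_1(0)<0$. Let $h_0,h_1$ be their height functions and $h_t=(1-t)h_0+th_1$. Then there exist $c,C\in(0,\infty)$ and $\bar s\in(0,1)$ depending only on $\rho_0,\rho_1$ such that $$c(1-s)^{-\frac{n}{n+2}}\le h_t'(s)\le C(1-s)^{-\frac{n}{n+2}}\quad\text{for all }t\in[0,1],\ s\in(\bar s,1).$$
   Context: Height function of a radially decreasing $\rho\in\mathcal{P}(\mathbb{R}^n)\cap L^\infty$: $h:(0,1)\to(0,\|\rho\|_\infty)$ defined by $\int_{\mathbb{R}^n}\min\{\rho(x),h(s)\}dx=s$. *)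

theory Defs
  imports "HOL-Analysis.Analysis"
begin

definition bounded_prob_density :: "('a::euclidean_space \<Rightarrow> real) \<Rightarrow> bool" where
  "bounded_prob_density \<rho> \<longleftrightarrow>
     \<rho> \<in> borel_measurable lborel \<and> (\<forall>x. 0 \<le> \<rho> x) \<and> integrable lborel \<rho> \<and>
     (\<integral>x. \<rho> x \<partial>lborel) = 1 \<and> (\<exists>M. AE x in lborel. \<bar>\<rho> x\<bar> \<le> M)"

definition radially_symmetric :: "('a::euclidean_space \<Rightarrow> real) \<Rightarrow> bool" where
  "radially_symmetric \<rho> \<longleftrightarrow> (\<forall>x y. norm x = norm y \<longrightarrow> \<rho> x = \<rho> y)"

definition strictly_radially_decreasing :: "('a::euclidean_space \<Rightarrow> real) \<Rightarrow> bool" where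
  "strictly_radially_decreasing \<rho> \<longleftrightarrow>
     (\<forall>x y. norm x < norm y \<longrightarrow> 0 < \<rho> y \<longrightarrow> \<rho> y < \<rho> x)"

definition supp :: "('a::euclidean_space \<Rightarrow> real) \<Rightarrow> 'a set" where
  "supp \<rho> = closure {x. \<rho> x \<noteq> 0}"

definition partial :: "'a::euclidean_space \<Rightarrow> ('a \<Rightarrow> real) \<Rightarrow> 'a \<Rightarrow> real" where
  "partial i f x = frechet_derivative f (at x) i"

definition C2_on :: "'a::euclidean_space set \<Rightarrow> ('a \<Rightarrow> real) \<Rightarrow> bool" where
  "C2_on U f \<longleftrightarrow>
     (\<forall>x\<in>U. f differentiable (at x)) \<and>
     (\<forall>i\<in>Basis. \<forall>x\<in>U. partial i f differentiable (at x)) \<and>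
     (\<forall>i\<in>Basis. \<forall>j\<in>Basis. continuous_on U (partial j (partial i f)))"

definition laplacian :: "('a::euclidean_space \<Rightarrow> real) \<Rightarrow> 'a \<Rightarrow> real" where
  "laplacian f x = (\<Sum>i\<in>Basis. partial i (partial i f) x)"

definition is_height_function :: "('a::euclidean_space \<Rightarrow> real) \<Rightarrow> (real \<Rightarrow> real) \<Rightarrow> bool" where
  "is_height_function \<rho> h \<longleftrightarrow>
     (\<forall>s\<in>{0<..<1}. (\<integral>x. min (\<rho> x) (h s) \<partial>lborel) = s)"

end

theory Submission
  imports Defs
begin


lemma dir_deriv:
  fixes g :: "'a::euclidean_space \<Rightarrow> real"
  assumes "g differentiable (at (r *\<^sub>R i))"
  shows "((\<lambda>r. g (r *\<^sub>R i)) has_real_derivative partial i g (r *\<^sub>R i)) (at r)"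
proof -
  let ?D = "frechet_derivative g (at (r *\<^sub>R i))"
  have d: "(g has_derivative ?D) (at (r *\<^sub>R i))"
    using assms frechet_derivative_works by blast
  have lin: "linear ?D" using has_derivative_linear[OF d] .
  have s: "((\<lambda>r. r *\<^sub>R i) has_derivative (\<lambda>h. h *\<^sub>R i)) (at r)"
    by (auto intro!: derivative_eq_intros)
  have "((\<lambda>r. g (r *\<^sub>R i)) has_derivative (\<lambda>h. ?D (h *\<^sub>R i))) (at r)"
    using has_derivative_compose[OF s d] by simp
  moreover have "(\<lambda>h. ?D (h *\<^sub>R i)) = (*) (?D i)"
    by (rule ext) (simp add: real_vector.linear_scale[OF lin])
  ultimately show ?thesis
    by (simp add: has_field_derivative_def partial_def)
qed



lemma profile:
  fixes \<rho> :: "'a::euclidean_space \<Rightarrow> real"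
  assumes bp: "bounded_prob_density \<rho>" and rs: "radially_symmetric \<rho>"
    and sd: "strictly_radially_decreasing \<rho>"
    and c2: "C2_on (interior (supp \<rho>)) \<rho>" and lap: "laplacian \<rho> 0 < 0"
  shows "\<exists>f r0 A B. 0 < r0 \<and> 0 < B \<and> B \<le> A \<and> (\<forall>x. \<rho> x = f (norm x)) \<and>
     continuous_on {0..r0} f \<and> (\<forall>r\<in>{0..r0}. f 0 - A*r^2 \<le> f r \<and> f r \<le> f 0 - B*r^2) \<and>
     0 < f r0 \<and> (\<forall>a b. 0 \<le> a \<longrightarrow> a < b \<longrightarrow> 0 < f b \<longrightarrow> f b < f a) \<and> (\<forall>r. 0 \<le> f r)"
proof -
  have nn: "\<And>x. 0 \<le> \<rho> x" using bp by (simp add: bounded_prob_density_def)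
  obtain e :: 'a where e: "e \<in> Basis" using nonempty_Basis by blast
  define f where "f = (\<lambda>r. \<rho> (r *\<^sub>R e))"
  have ne: "norm e = 1" using e by simp
  have fx: "\<rho> x = f (norm x)" for x
  proof -
    have "norm (norm x *\<^sub>R e) = norm x" using ne by simp
    thus ?thesis using rs unfolding radially_symmetric_def f_def by metis
  qed
  have fi: "(\<lambda>r. \<rho> (r *\<^sub>R i)) = f" if "i \<in> Basis" for i
  proof
    fix r show "\<rho> (r *\<^sub>R i) = f r"
      using rs that ne unfolding radially_symmetric_def f_def by simp
  qed
  have fnorm: "f r = f \<bar>r\<bar>" for r using fx[of "r *\<^sub>R e"] ne by (simp add: f_def)
  have le0: "\<rho> x \<le> \<rho> 0" for x
  proof (cases "x = 0")
    case False
    show ?thesis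
    proof (cases "\<rho> x = 0")
      case True then show ?thesis using nn[of 0] by simp
    next
      case False
      hence "0 < \<rho> x" using nn[of x] by simp
      moreover have "norm (0::'a) < norm x" using \<open>x \<noteq> 0\<close> by simp
      ultimately show ?thesis using sd unfolding strictly_radially_decreasing_def by (meson less_imp_le)
    qed
  qed simp
  have "\<exists>y. y \<noteq> 0 \<and> 0 < \<rho> y"
  proof (rule ccontr)
    assume "\<not> ?thesis"
    hence "\<forall>y. y \<noteq> 0 \<longrightarrow> \<rho> y = 0" using nn by (metis less_eq_real_def)
    hence ae: "AE x in lborel. \<rho> x = 0" using AE_lborel_singleton[of 0] by (auto elim!: AE_mp)
    have "(\<integral>x. \<rho> x \<partial>lborel) = 0" by (rule integral_eq_zero_AE[OF ae])
    thus False using bp by (simp add: bounded_prob_density_def)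
  qed
  then obtain y where y: "y \<noteq> 0" "0 < \<rho> y" by blast
  define r1 where "r1 = norm y"
  have r1: "0 < r1" using y by (simp add: r1_def)
  have "ball 0 r1 \<subseteq> {x. \<rho> x \<noteq> 0}"
  proof
    fix x assume "x \<in> ball (0::'a) r1"
    hence "norm x < norm y" by (simp add: r1_def)
    hence "\<rho> y < \<rho> x" using sd y unfolding strictly_radially_decreasing_def by blast
    thus "x \<in> {x. \<rho> x \<noteq> 0}" using y by simp
  qed
  hence "ball 0 r1 \<subseteq> supp \<rho>" unfolding supp_def using closure_subset by blast
  hence bsub: "ball 0 r1 \<subseteq> interior (supp \<rho>)" by (simp add: interior_maximal)
  have diff1: "\<rho> differentiable (at x)" if "norm x < r1" for x
    using c2 bsub that unfolding C2_on_def by auto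
  have diff2: "partial i \<rho> differentiable (at 0)" if "i \<in> Basis" for i
  proof -
    have "(0::'a) \<in> interior (supp \<rho>)" using bsub r1 by auto
    thus ?thesis using c2 that unfolding C2_on_def by blast
  qed
  define f' where "f' = (\<lambda>r. partial e \<rho> (r *\<^sub>R e))"
  have fd: "(f has_real_derivative f' r) (at r)" if "\<bar>r\<bar> < r1" for r
    using dir_deriv[of \<rho> r e] diff1[of "r *\<^sub>R e"] that ne unfolding f_def f'_def by simp
  have fdi: "partial i \<rho> (r *\<^sub>R i) = f' r" if "\<bar>r\<bar> < r1" "i \<in> Basis" for r i
    using dir_deriv[of \<rho> r i] diff1[of "r *\<^sub>R i"] that fd[OF that(1)] fi[OF that(2)]
    by (simp add: DERIV_unique)
  define L2 where "L2 = partial e (partial e \<rho>) 0"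
  have f'd: "(f' has_real_derivative L2) (at 0)"
    using dir_deriv[of "partial e \<rho>" 0 e] diff2[OF e] unfolding f'_def L2_def by simp
  have ii: "partial i (partial i \<rho>) 0 = L2" if "i \<in> Basis" for i
  proof -
    have "((\<lambda>r. partial i \<rho> (r *\<^sub>R i)) has_real_derivative partial i (partial i \<rho>) 0) (at 0)"
      using dir_deriv[of "partial i \<rho>" 0 i] diff2[OF that] by simp
    hence "(f' has_real_derivative partial i (partial i \<rho>) 0) (at 0)"
      by (rule has_field_derivative_transform_within_open[where S="ball 0 r1"]) (use r1 fdi that in auto)
    thus ?thesis using f'd DERIV_unique by blast
  qed
  have "laplacian \<rho> 0 = real DIM('a) * L2"
    unfolding laplacian_def using ii by simp
  hence L2neg: "L2 < 0" using lap by (simp add: mult_less_0_iff)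
  have f'0: "f' 0 = 0"
  proof (rule DERIV_local_max[OF fd r1])
    show "\<forall>y. \<bar>0 - y\<bar> < r1 \<longrightarrow> f y \<le> f 0" using le0 unfolding f_def by simp
  qed (use r1 in simp)
  define L where "L = - L2"
  have L: "0 < L" using L2neg by (simp add: L_def)
  have "((\<lambda>y. (f' y - f' 0) / (y - 0)) \<midarrow>0\<rightarrow> L2)"
    using f'd by (simp add: has_field_derivative_iff)
  from LIM_D[OF this, of "L/2"] L obtain \<delta> where \<delta>: "0 < \<delta>"
    "\<And>x. x \<noteq> 0 \<and> norm (x - 0) < \<delta> \<Longrightarrow> norm ((f' x - f' 0) / (x - 0) - L2) < L/2" by auto
  have f'b: "-3*L/2 * x < f' x \<and> f' x < - L/2 * x" if "0 < x" "x < \<delta>" for x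
  proof -
    have "\<bar>f' x / x - L2\<bar> < L/2" using \<delta>(2)[of x] that f'0 by simp
    hence "-3*L/2 < f' x / x" "f' x / x < - L/2" unfolding L_def by linarith+
    thus ?thesis using that by (simp add: field_simps)
  qed
  define M where "M = f 0"
  have M: "0 < M" using y le0[of y] unfolding M_def f_def by simp
  define A where "A = 3*L/4"
  define B where "B = L/4"
  define r0 where "r0 = min (min (\<delta>/2) (r1/2)) (sqrt (M / (2*A)))"
  have A: "0 < A" and B: "0 < B" and BA: "B \<le> A" using L by (auto simp: A_def B_def)
  have r0: "0 < r0" "r0 < \<delta>" "r0 < r1" using \<delta> r1 M A by (auto simp: r0_def)
  have r0A: "A * r0^2 \<le> M/2"
  proof -
    have "r0 \<le> sqrt (M / (2*A))" by (simp add: r0_def)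
    hence "r0^2 \<le> (sqrt (M / (2*A)))^2" using r0 by (intro power_mono) auto
    also have "\<dots> = M/(2*A)" using M A by simp
    finally have "r0^2 \<le> M/(2*A)" .
    thus ?thesis using A by (simp add: field_simps)
  qed
  have cont: "continuous_on {0..r0} f"
  proof (rule continuous_at_imp_continuous_on, intro ballI)
    fix x assume "x \<in> {0..r0}"
    hence "\<bar>x\<bar> < r1" using r0 by auto
    thus "isCont f x" using fd DERIV_isCont by blast
  qed
  have bounds: "M - A*r^2 \<le> f r \<and> f r \<le> M - B*r^2" if "r \<in> {0..r0}" for r
  proof
    define g1 where "g1 = (\<lambda>x. f x + A*x^2)"
    have "g1 0 \<le> g1 r"
    proof (rule DERIV_nonneg_imp_increasing_open[of 0 r g1])
      show "continuous_on {0..r} g1" unfolding g1_def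
        using cont that by (auto intro!: continuous_intros elim: continuous_on_subset)
      fix x assume "0 < x" "x < r"
      then show "\<exists>y. (g1 has_real_derivative y) (at x) \<and> 0 \<le> y"
        using fd[of x] f'b[of x] r0 that
        by (intro exI[of _ "f' x + A*(2*x)"]) (auto intro!: derivative_eq_intros simp: A_def g1_def)
    qed (use that in auto)
    thus "M - A*r^2 \<le> f r" by (simp add: M_def g1_def)
    define g2 where "g2 = (\<lambda>x. f x + B*x^2)"
    have "g2 r \<le> g2 0"
    proof (rule DERIV_nonpos_imp_decreasing_open[of 0 r g2])
      show "continuous_on {0..r} g2" unfolding g2_def
        using cont that by (auto intro!: continuous_intros elim: continuous_on_subset)
      fix x assume "0 < x" "x < r"
      then show "\<exists>y. (g2 has_real_derivative y) (at x) \<and> y \<le> 0"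
        using fd[of x] f'b[of x] r0 that
        by (intro exI[of _ "f' x + B*(2*x)"]) (auto intro!: derivative_eq_intros simp: B_def g2_def)
    qed (use that in auto)
    thus "f r \<le> M - B*r^2" by (simp add: M_def g2_def)
  qed
  have fr0: "0 < f r0" using bounds[of r0] r0 r0A M by auto
  have sdf: "f b < f a" if "0 \<le> a" "a < b" "0 < f b" for a b
    using sd that ne unfolding strictly_radially_decreasing_def f_def by auto
  show ?thesis
    apply (rule exI[of _ f], rule exI[of _ r0], rule exI[of _ A], rule exI[of _ B])
    using r0 B BA fx cont bounds fr0 sdf nn unfolding M_def f_def by auto
qed



lemma final_arith:
  fixes X c1 c2 k S P :: real
  assumes X: "0 < X" and c1: "0 < c1" and c2: "0 < c2" and k: "0 < k"
    and S1: "c1/(k+1) * X powr (k+1) \<le> S" and S2: "S \<le> c2/(k+1) * X powr (k+1)"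
    and P1: "c1 * X powr k \<le> P" and P2: "P \<le> c2 * X powr k"
  shows "(c1/(k+1)) powr (k/(k+1)) / c2 * S powr (-(k/(k+1))) \<le> inverse P \<and>
         inverse P \<le> (c2/(k+1)) powr (k/(k+1)) / c1 * S powr (-(k/(k+1)))"
proof -
  define p where "p = k+1"
  define q where "q = k/(k+1)"
  have p: "0 < p" using k by (simp add: p_def)
  have q: "0 < q" using k by (simp add: q_def)
  have pq: "p * q = k" using k by (simp add: p_def q_def)
  have Xk: "0 < X powr k" using X by simp
  have S: "0 < S" using S1 X c1 p by (smt (verit) divide_pos_pos mult_pos_pos powr_gt_zero p_def)
  have P: "0 < P" using P1 c1 Xk by (smt (verit) mult_pos_pos)
  have e1: "(a * X powr p) powr q = a powr q * X powr k" if "0 \<le> a" for a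
    using that X by (simp add: powr_mult powr_powr pq)
  have Su: "S powr q \<le> (c2/p) powr q * X powr k"
  proof -
    have "S powr q \<le> (c2/p * X powr p) powr q"
      using S S2 q by (intro powr_mono2) (auto simp: p_def)
    thus ?thesis using e1[of "c2/p"] c2 p by simp
  qed
  have Sl: "(c1/p) powr q * X powr k \<le> S powr q"
  proof -
    have "(c1/p * X powr p) powr q \<le> S powr q"
      using S S1 q c1 p by (intro powr_mono2) (auto simp: p_def)
    thus ?thesis using e1[of "c1/p"] c1 p by simp
  qed
  have Sq: "0 < S powr q" using S by simp
  have inv: "S powr (-q) = inverse (S powr q)" using S by (simp add: powr_minus)
  have a1: "(c1/p) powr q / c2 * inverse (S powr q) \<le> inverse P"
  proof -
    have "(c1/p) powr q / c2 * inverse (S powr q) = ((c1/p) powr q) / (c2 * S powr q)"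
      by (simp add: field_simps)
    also have "\<dots> \<le> ((c1/p) powr q) / (c2 * ((c1/p) powr q * X powr k))"
    proof -
      have "0 < (c1/p) powr q * X powr k" using c1 p X by simp
      thus ?thesis using Sl c2 by (intro divide_left_mono mult_left_mono mult_pos_pos) auto
    qed
    also have "\<dots> = inverse (c2 * X powr k)" using c1 p by (simp add: field_simps)
    also have "\<dots> \<le> inverse P" using P P2 by (intro le_imp_inverse_le) auto
    finally show ?thesis .
  qed
  have a2: "inverse P \<le> (c2/p) powr q / c1 * inverse (S powr q)"
  proof -
    have "inverse P \<le> inverse (c1 * X powr k)" using P1 c1 Xk by (intro le_imp_inverse_le) auto
    also have "\<dots> = ((c2/p) powr q) / (c1 * ((c2/p) powr q * X powr k))" using c2 p by (simp add: field_simps)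
    also have "\<dots> \<le> ((c2/p) powr q) / (c1 * S powr q)"
      using Su c1 Sq by (intro divide_left_mono mult_left_mono mult_pos_pos) auto
    also have "\<dots> = (c2/p) powr q / c1 * inverse (S powr q)" by (simp add: field_simps)
    finally show ?thesis .
  qed
  show ?thesis using a1 a2 inv unfolding p_def q_def by simp
qed



lemma deriv_sandwich:
  fixes H \<Phi> :: "real \<Rightarrow> real"
  assumes av: "a < v" and vb: "v < b" and cont: "isCont \<Phi> v"
    and KI: "\<And>x y. a < x \<Longrightarrow> x \<le> y \<Longrightarrow> y < b \<Longrightarrow> (y-x)*\<Phi> y \<le> H y - H x \<and> H y - H x \<le> (y-x)*\<Phi> x"
  shows "(H has_real_derivative \<Phi> v) (at v)"
  unfolding has_field_derivative_iff
proof (rule tendsto_sandwich)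
  have ev: "eventually (\<lambda>y. y \<in> {a<..<b}) (nhds v)"
    using av vb by (intro eventually_nhds_in_open) auto
  have ev2: "eventually (\<lambda>y. y \<noteq> v \<and> a < y \<and> y < b) (at v)"
    unfolding eventually_at_filter by (rule eventually_mono[OF ev]) auto
  have q: "min (\<Phi> y) (\<Phi> v) \<le> (H y - H v) / (y - v) \<and> (H y - H v) / (y - v) \<le> max (\<Phi> y) (\<Phi> v)"
    if "y \<noteq> v" "a < y" "y < b" for y
  proof (cases "v < y")
    case True
    have "(y-v)*\<Phi> y \<le> H y - H v \<and> H y - H v \<le> (y-v)*\<Phi> v" using KI[of v y] True av that by auto
    hence "\<Phi> y \<le> (H y - H v) / (y - v) \<and> (H y - H v) / (y - v) \<le> \<Phi> v"
      using True by (simp add: pos_le_divide_eq pos_divide_le_eq mult.commute)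
    thus ?thesis by linarith
  next
    case False
    hence yv: "y < v" using that by auto
    have "(v-y)*\<Phi> v \<le> H v - H y \<and> H v - H y \<le> (v-y)*\<Phi> y" using KI[of y v] yv vb that by auto
    hence "\<Phi> v \<le> (H v - H y) / (v - y) \<and> (H v - H y) / (v - y) \<le> \<Phi> y"
      using yv by (simp add: pos_le_divide_eq pos_divide_le_eq mult.commute)
    moreover have "(H v - H y) / (v - y) = (H y - H v) / (y - v)"
      by (metis minus_diff_eq minus_divide_divide)
    ultimately show ?thesis by linarith
  qed
  show "eventually (\<lambda>y. min (\<Phi> y) (\<Phi> v) \<le> (H y - H v) / (y - v)) (at v)"
    by (rule eventually_mono[OF ev2]) (use q in blast)
  show "eventually (\<lambda>y. (H y - H v) / (y - v) \<le> max (\<Phi> y) (\<Phi> v)) (at v)"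
    by (rule eventually_mono[OF ev2]) (use q in blast)
  have t: "(\<Phi> \<longlongrightarrow> \<Phi> v) (at v)" using cont by (simp add: isCont_def)
  show "((\<lambda>y. min (\<Phi> y) (\<Phi> v)) \<longlongrightarrow> \<Phi> v) (at v)"
    using tendsto_min[OF t tendsto_const[of "\<Phi> v"]] by simp
  show "((\<lambda>y. max (\<Phi> y) (\<Phi> v)) \<longlongrightarrow> \<Phi> v) (at v)"
    using tendsto_max[OF t tendsto_const[of "\<Phi> v"]] by simp
qed

lemma compare_bounds:
  fixes H \<Phi> :: "real \<Rightarrow> real"
  assumes uM: "u \<le> M" and cont: "continuous_on {u..M} H" and k: "0 < k"
    and der: "\<And>v. u < v \<Longrightarrow> v < M \<Longrightarrow> (H has_real_derivative \<Phi> v) (at v)"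
    and lo: "\<And>v. u < v \<Longrightarrow> v < M \<Longrightarrow> c1 * (M-v) powr k \<le> \<Phi> v"
    and up: "\<And>v. u < v \<Longrightarrow> v < M \<Longrightarrow> \<Phi> v \<le> c2 * (M-v) powr k"
  shows "c1/(k+1) * (M-u) powr (k+1) \<le> H M - H u \<and> H M - H u \<le> c2/(k+1) * (M-u) powr (k+1)"
proof -
  have pd: "((\<lambda>v. (M - v) powr (k+1)) has_real_derivative - ((k+1) * (M-v) powr k)) (at v)"
    if "v < M" for v
    using that by - (rule derivative_eq_intros refl | simp)+
  have pc: "continuous_on {u..M} (\<lambda>v. (M - v) powr (k+1))"
    using k by (intro continuous_on_powr' continuous_intros) auto
  define G1 where "G1 = (\<lambda>v. H v + c1/(k+1) * (M - v) powr (k+1))"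
  define G2 where "G2 = (\<lambda>v. H v + c2/(k+1) * (M - v) powr (k+1))"
  have "G1 u \<le> G1 M"
  proof (rule DERIV_nonneg_imp_increasing_open[of u M G1])
    show "continuous_on {u..M} G1" unfolding G1_def by (intro continuous_on_add continuous_on_mult_left cont pc)
    fix v assume v: "u < v" "v < M"
    have "(G1 has_real_derivative \<Phi> v + c1/(k+1) * (- ((k+1) * (M-v) powr k))) (at v)"
      using DERIV_add[OF der[OF v] DERIV_cmult[OF pd, of v "c1/(k+1)"]] v unfolding G1_def by simp
    moreover have "\<Phi> v + c1/(k+1) * (- ((k+1) * (M-v) powr k)) = \<Phi> v - c1 * (M-v) powr k"
      using k by (simp add: field_simps)
    ultimately show "\<exists>y. (G1 has_real_derivative y) (at v) \<and> 0 \<le> y" using lo[OF v] by auto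
  qed (use uM in auto)
  moreover have "G2 M \<le> G2 u"
  proof (rule DERIV_nonpos_imp_decreasing_open[of u M G2])
    show "continuous_on {u..M} G2" unfolding G2_def by (intro continuous_on_add continuous_on_mult_left cont pc)
    fix v assume v: "u < v" "v < M"
    have "(G2 has_real_derivative \<Phi> v + c2/(k+1) * (- ((k+1) * (M-v) powr k))) (at v)"
      using DERIV_add[OF der[OF v] DERIV_cmult[OF pd, of v "c2/(k+1)"]] v unfolding G2_def by simp
    moreover have "\<Phi> v + c2/(k+1) * (- ((k+1) * (M-v) powr k)) = \<Phi> v - c2 * (M-v) powr k"
      using k by (simp add: field_simps)
    ultimately show "\<exists>y. (G2 has_real_derivative y) (at v) \<and> y \<le> 0" using up[OF v] by auto
  qed (use uM in auto)
  moreover have "G1 M = H M" "G2 M = H M" unfolding G1_def G2_def by simp_all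
  moreover have "G1 u = H u + c1/(k+1) * (M - u) powr (k+1)" "G2 u = H u + c2/(k+1) * (M - u) powr (k+1)"
    unfolding G1_def G2_def by simp_all
  ultimately show ?thesis by linarith
qed



lemma single:
  fixes \<rho> :: "'a::euclidean_space \<Rightarrow> real" and f h :: "real \<Rightarrow> real"
  assumes meas: "\<rho> \<in> borel_measurable lborel" and int: "integrable lborel \<rho>"
    and one: "(\<integral>x. \<rho> x \<partial>lborel) = 1"
    and fx: "\<forall>x. \<rho> x = f (norm x)" and rz: "0 < rz" and B: "0 < B" and BA: "B \<le> A"
    and cont: "continuous_on {0..rz} f"
    and bnd: "\<forall>r\<in>{0..rz}. f 0 - A*r^2 \<le> f r \<and> f r \<le> f 0 - B*r^2"
    and frz: "0 < f rz" and sdf: "\<forall>a b. 0 \<le> a \<longrightarrow> a < b \<longrightarrow> 0 < f b \<longrightarrow> f b < f a"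
    and fnn: "\<forall>r. 0 \<le> f r" and hh: "is_height_function \<rho> h"
  shows "\<exists>c C sbar. 0 < c \<and> 0 < C \<and> 0 < sbar \<and> sbar < 1 \<and>
     (\<forall>s\<in>{sbar<..<1}. \<exists>D. (h has_real_derivative D) (at s) \<and>
        c * (1 - s) powr (- real DIM('a) / (real DIM('a) + 2)) \<le> D \<and>
        D \<le> C * (1 - s) powr (- real DIM('a) / (real DIM('a) + 2)))"
proof -
  define n where "n = DIM('a)"
  have n: "0 < n" by (simp add: n_def)
  define M where "M = f 0"
  define u0 where "u0 = f rz"
  have nn: "0 \<le> \<rho> x" for x using fx fnn by simp
  have u0M: "u0 < M" using sdf rz frz unfolding u0_def M_def by auto
  have u0: "0 < u0" using frz by (simp add: u0_def)
  have A: "0 < A" using B BA by simp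
  have sdf': "\<And>a b. 0 \<le> a \<Longrightarrow> a < b \<Longrightarrow> 0 < f b \<Longrightarrow> f b < f a" using sdf by blast
  have fcases: "f r = 0 \<or> 0 < f r" for r using fnn by (metis less_eq_real_def)
  have fle: "f r \<le> M" if "0 \<le> r" for r
  proof (cases "r = 0")
    case False
    hence "0 < r" using that by simp
    thus ?thesis using fcases[of r] sdf[rule_format, of 0 r] u0 u0M unfolding M_def by auto
  qed (simp add: M_def)
  have rhoM: "\<rho> x \<le> M" for x using fx fle by simp
  have fge: "u0 \<le> f r" if "r \<in> {0..rz}" for r
  proof (cases "r = rz")
    case False
    hence "r < rz" using that by simp
    thus ?thesis using sdf'[of r rz] frz that unfolding u0_def by auto
  qed (simp add: u0_def)
  have img: "f ` {0..rz} = {u0..M}"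
  proof
    show "f ` {0..rz} \<subseteq> {u0..M}" using fge fle by auto
    show "{u0..M} \<subseteq> f ` {0..rz}"
    proof
      fix v assume "v \<in> {u0..M}"
      then obtain x where "0 \<le> x" "x \<le> rz" "f x = v"
        using IVT2'[of f rz v 0] cont rz unfolding u0_def M_def by auto
      thus "v \<in> f ` {0..rz}" by auto
    qed
  qed
  have inj: "inj_on f {0..rz}"
  proof (rule inj_onI)
    fix a b assume ab: "a \<in> {0..rz}" "b \<in> {0..rz}" "f a = f b"
    show "a = b"
    proof (rule ccontr)
      assume "a \<noteq> b"
      hence "a < b \<or> b < a" by auto
      thus False
      proof
        assume "a < b" thus False using ab sdf'[of a b] fge[of b] u0 by auto
      next
        assume "b < a" thus False using ab sdf'[of b a] fge[of a] u0 by auto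
      qed
    qed
  qed
  define R where "R = the_inv_into {0..rz} f"
  have Rin: "R v \<in> {0..rz}" if "v \<in> {u0..M}" for v
    unfolding R_def by (rule the_inv_into_into[OF inj]) (use img that in auto)
  have fR: "f (R v) = v" if "v \<in> {u0..M}" for v
    unfolding R_def by (rule f_the_inv_into_f[OF inj]) (use img that in auto)
  have Rcont: "continuous_on {u0..M} R"
  proof -
    have "continuous_on (f ` {0..rz}) R"
      by (rule continuous_on_inv[OF cont compact_Icc]) (use inj in \<open>simp add: R_def the_inv_into_f_f\<close>)
    thus ?thesis using img by simp
  qed
  have R0: "R M = 0" unfolding R_def M_def using the_inv_into_f_f[OF inj, of 0] rz by simp
  have Rpos: "0 < R v" if "v \<in> {u0..<M}" for v
  proof -
    have "R v \<noteq> 0" using fR[of v] that unfolding M_def by auto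
    thus ?thesis using Rin[of v] that by auto
  qed
  have gt_iff: "v < \<rho> x \<longleftrightarrow> norm x < R v" if v: "v \<in> {u0..M}" for v x
  proof
    assume "norm x < R v"
    thus "v < \<rho> x" using sdf'[of "norm x" "R v"] fR[OF v] v u0 fx by auto
  next
    assume a: "v < \<rho> x"
    show "norm x < R v"
    proof (rule ccontr)
      assume "\<not> norm x < R v"
      hence "norm x = R v \<or> R v < norm x" by auto
      thus False
      proof
        assume "norm x = R v" thus False using a fx fR[OF v] by auto
      next
        assume "R v < norm x"
        thus False using a fx fR[OF v] sdf'[of "R v" "norm x"] Rin[OF v] fcases[of "norm x"] v u0 by auto
      qed
    qed
  qed
  have ge_iff: "v \<le> \<rho> x \<longleftrightarrow> norm x \<le> R v" if v: "v \<in> {u0..M}" for v x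
  proof
    assume "norm x \<le> R v"
    hence "norm x = R v \<or> norm x < R v" by auto
    thus "v \<le> \<rho> x" using sdf'[of "norm x" "R v"] fR[OF v] v u0 fx by auto
  next
    assume a: "v \<le> \<rho> x"
    show "norm x \<le> R v"
    proof (rule ccontr)
      assume "\<not> norm x \<le> R v"
      hence "R v < norm x" by auto
      thus False using a fx fR[OF v] sdf'[of "R v" "norm x"] Rin[OF v] fcases[of "norm x"] v u0 by auto
    qed
  qed
  define \<omega> where "\<omega> = unit_ball_vol (real n)"
  have \<omega>: "0 < \<omega>" by (simp add: \<omega>_def)
  define \<Phi> where "\<Phi> v = \<omega> * R v ^ n" for v
  have mb: "measure lborel (ball (0::'a) r) = \<omega> * r^n" if "0 \<le> r" for r
    using content_ball[OF that] by (simp add: \<omega>_def n_def)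
  have mcb: "measure lborel (cball (0::'a) r) = \<omega> * r^n" if "0 \<le> r" for r
    using content_cball[OF that] by (simp add: \<omega>_def n_def)
  define H where "H v = (\<integral>x. min (\<rho> x) v \<partial>lborel)" for v
  have mmin: "(\<lambda>x. min (\<rho> x) v) \<in> borel_measurable lborel" for v
    using meas by measurable
  have intmin: "integrable lborel (\<lambda>x. min (\<rho> x) v)" if "0 \<le> v" for v
    by (rule Bochner_Integration.integrable_bound[OF int mmin]) (use nn that in auto)
  have Hge: "H w = 1" if "M \<le> w" for w
  proof -
    have "\<And>x. min (\<rho> x) w = \<rho> x" using rhoM that by (meson min_absorb1 order_trans)
    thus ?thesis using one by (simp add: H_def)
  qed
  have Hmono: "H v \<le> H w" if "0 \<le> v" "v \<le> w" for v w
    unfolding H_def using that by (intro Bochner_Integration.integral_mono intmin) auto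
  have Hnn: "0 \<le> H v" if "0 \<le> v" for v
    unfolding H_def using that nn by (intro Bochner_Integration.integral_nonneg) auto
  have Hneg: "H v \<le> 0" if "v < 0" for v
  proof -
    have "0 \<le> (\<integral>x. - min (\<rho> x) v \<partial>lborel)" using that by (intro Bochner_Integration.integral_nonneg) auto
    thus ?thesis by (simp add: H_def)
  qed
  have KI: "(w-v)*\<Phi> w \<le> H w - H v \<and> H w - H v \<le> (w-v)*\<Phi> v"
    if v: "v \<in> {u0..M}" and w: "w \<in> {u0..M}" and vw: "v \<le> w" for v w
  proof -
    have v0: "0 \<le> v" "0 \<le> w" using v w u0 by auto
    have Rv: "0 \<le> R v" "0 \<le> R w" using Rin[OF v] Rin[OF w] by auto
    have diff: "H w - H v = (\<integral>x. min (\<rho> x) w - min (\<rho> x) v \<partial>lborel)"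
      unfolding H_def by (rule Bochner_Integration.integral_diff[OF intmin intmin, symmetric]) (use v0 in auto)
    have ib: "integrable lborel (\<lambda>x. (w-v) * indicator (ball (0::'a) (R v)) x)"
      by (intro integrable_mult_right integrable_real_indicator) (auto simp: emeasure_ball[OF Rv(1)])
    have icb: "integrable lborel (\<lambda>x. (w-v) * indicator (cball (0::'a) (R w)) x)"
      by (intro integrable_mult_right integrable_real_indicator) (auto simp: emeasure_cball[OF Rv(2)])
    have idiff: "integrable lborel (\<lambda>x. min (\<rho> x) w - min (\<rho> x) v)"
      using intmin v0 by auto
    have "(\<integral>x. min (\<rho> x) w - min (\<rho> x) v \<partial>lborel) \<le> (\<integral>x. (w-v) * indicator (ball (0::'a) (R v)) x \<partial>lborel)"
    proof (rule Bochner_Integration.integral_mono[OF idiff ib])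
      fix x :: 'a
      show "min (\<rho> x) w - min (\<rho> x) v \<le> (w-v) * indicator (ball 0 (R v)) x"
      proof (cases "norm x < R v")
        case True thus ?thesis using vw by (simp add: indicator_def)
      next
        case False
        hence "\<rho> x \<le> v" using gt_iff[OF v, of x] by simp
        thus ?thesis using vw False by (simp add: indicator_def)
      qed
    qed
    also have "\<dots> = (w-v) * \<Phi> v" using mb[OF Rv(1)] by (simp add: \<Phi>_def)
    finally have up: "H w - H v \<le> (w-v)*\<Phi> v" using diff by simp
    have "(\<integral>x. (w-v) * indicator (cball (0::'a) (R w)) x \<partial>lborel) \<le> (\<integral>x. min (\<rho> x) w - min (\<rho> x) v \<partial>lborel)"
    proof (rule Bochner_Integration.integral_mono[OF icb idiff])
      fix x :: 'a
      show "(w-v) * indicator (cball 0 (R w)) x \<le> min (\<rho> x) w - min (\<rho> x) v"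
      proof (cases "norm x \<le> R w")
        case True
        hence "w \<le> \<rho> x" using ge_iff[OF w, of x] by simp
        thus ?thesis using vw True by (simp add: indicator_def)
      next
        case False thus ?thesis using vw by (simp add: indicator_def)
      qed
    qed
    moreover have "(\<integral>x. (w-v) * indicator (cball (0::'a) (R w)) x \<partial>lborel) = (w-v) * \<Phi> w"
      using mcb[OF Rv(2)] by (simp add: \<Phi>_def)
    ultimately have lo: "(w-v)*\<Phi> w \<le> H w - H v" using diff by (cases "w = v") simp_all
    show ?thesis using up lo by simp
  qed

  have Phicont: "continuous_on {u0..M} \<Phi>"
    unfolding \<Phi>_def by (intro continuous_intros Rcont)
  have PhiK: "\<Phi> v \<le> \<omega> * rz^n" if "v \<in> {u0..M}" for v
    unfolding \<Phi>_def using Rin[OF that] \<omega> by (intro mult_left_mono power_mono) auto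
  have Phinn: "0 \<le> \<Phi> v" if "v \<in> {u0..M}" for v
    unfolding \<Phi>_def using Rin[OF that] \<omega> by simp
  have Hcont: "continuous_on {u0..M} H"
  proof (rule lipschitz_on_continuous_on)
    show "(\<omega> * rz^n)-lipschitz_on {u0..M} H"
    proof (rule lipschitz_onI)
      fix x y assume x: "x \<in> {u0..M}" and y: "y \<in> {u0..M}"
      show "dist (H x) (H y) \<le> \<omega> * rz ^ n * dist x y"
      proof (cases "x \<le> y")
        case True
        have "H y - H x \<le> (y-x)*\<Phi> x" "0 \<le> (y-x)*\<Phi> y" "(y-x)*\<Phi> y \<le> H y - H x"
          using KI[OF x y True] Phinn[OF y] True by auto
        moreover have "(y-x)*\<Phi> x \<le> (y-x)*(\<omega> * rz^n)" using PhiK[OF x] True by (intro mult_left_mono) auto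
        ultimately show ?thesis using True by (simp add: dist_real_def abs_if mult.commute)
      next
        case False
        hence yx: "y \<le> x" by simp
        have "H x - H y \<le> (x-y)*\<Phi> y" "0 \<le> (x-y)*\<Phi> x" "(x-y)*\<Phi> x \<le> H x - H y"
          using KI[OF y x yx] Phinn[OF x] yx by auto
        moreover have "(x-y)*\<Phi> y \<le> (x-y)*(\<omega> * rz^n)" using PhiK[OF y] yx by (intro mult_left_mono) auto
        ultimately show ?thesis using yx by (simp add: dist_real_def abs_if mult.commute)
      qed
    qed (use \<omega> rz in simp)
  qed
  have Hder: "(H has_real_derivative \<Phi> v) (at v)" if "v \<in> {u0<..<M}" for v
  proof (rule deriv_sandwich[of u0 v M])
    have "continuous_on {u0<..<M} \<Phi>" using Phicont by (rule continuous_on_subset) auto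
    hence "\<forall>x\<in>{u0<..<M}. isCont \<Phi> x" using continuous_on_eq_continuous_at[of "{u0<..<M}" \<Phi>] by simp
    thus "isCont \<Phi> v" using that by blast
    fix x y assume "u0 < x" "x \<le> y" "y < M"
    thus "(y-x)*\<Phi> y \<le> H y - H x \<and> H y - H x \<le> (y-x)*\<Phi> x" using KI[of x y] by auto
  qed (use that in auto)
  define k where "k = real n / 2"
  have k: "0 < k" using n by (simp add: k_def)
  define c1 where "c1 = \<omega> * (1/A) powr k"
  define c2 where "c2 = \<omega> * (1/B) powr k"
  have c1: "0 < c1" using \<omega> A by (simp add: c1_def)
  have c2: "0 < c2" using \<omega> B by (simp add: c2_def)
  have pw: "r ^ n = (r^2) powr k" if "0 \<le> r" for r
  proof (cases "r = 0")
    case True thus ?thesis using n k by simp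
  next
    case False
    hence r: "0 < r" using that by simp
    have "(r^2) powr k = (r powr 2) powr k" using r by (simp add: powr_realpow)
    also have "\<dots> = r powr (real n)" by (simp add: powr_powr k_def)
    also have "\<dots> = r ^ n" using r by (simp add: powr_realpow)
    finally show ?thesis by simp
  qed
  have Phib: "c1 * (M-v) powr k \<le> \<Phi> v \<and> \<Phi> v \<le> c2 * (M-v) powr k" if v: "v \<in> {u0..M}" for v
  proof -
    define r where "r = R v"
    have r: "r \<in> {0..rz}" "f r = v" using Rin[OF v] fR[OF v] by (auto simp: r_def)
    have "M - A*r^2 \<le> v" "v \<le> M - B*r^2" using bnd r unfolding M_def by auto
    hence r2: "(M-v)/A \<le> r^2" "r^2 \<le> (M-v)/B" using A B by (auto simp: field_simps)
    have Mv: "0 \<le> M - v" using v by simp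
    have "((M-v)/A) powr k \<le> (r^2) powr k" using r2 Mv A k by (intro powr_mono2) auto
    moreover have "(r^2) powr k \<le> ((M-v)/B) powr k" using r2 Mv B k by (intro powr_mono2) auto
    moreover have "((M-v)/A) powr k = (1/A) powr k * (M-v) powr k"
      using Mv A by (subst powr_mult[symmetric]) auto
    moreover have "((M-v)/B) powr k = (1/B) powr k * (M-v) powr k"
      using Mv B by (subst powr_mult[symmetric]) auto
    moreover have "\<Phi> v = \<omega> * (r^2) powr k" unfolding \<Phi>_def r_def using pw[of "R v"] Rin[OF v] by simp
    ultimately show ?thesis unfolding c1_def c2_def using \<omega>
      by (simp add: mult.assoc mult_left_mono)
  qed
  have cmp: "c1/(k+1) * (M-u) powr (k+1) \<le> 1 - H u \<and> 1 - H u \<le> c2/(k+1) * (M-u) powr (k+1)"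
    if u: "u \<in> {u0..M}" for u
  proof -
    have "c1/(k+1) * (M-u) powr (k+1) \<le> H M - H u \<and> H M - H u \<le> c2/(k+1) * (M-u) powr (k+1)"
    proof (rule compare_bounds[where \<Phi>=\<Phi>])
      show "continuous_on {u..M} H" using Hcont by (rule continuous_on_subset) (use u in auto)
      fix v assume "u < v" "v < M"
      hence v: "v \<in> {u0..M}" "v \<in> {u0<..<M}" using u by auto
      show "(H has_real_derivative \<Phi> v) (at v)" using Hder[OF v(2)] .
      show "c1 * (M-v) powr k \<le> \<Phi> v" using Phib[OF v(1)] by simp
      show "\<Phi> v \<le> c2 * (M-v) powr k" using Phib[OF v(1)] by simp
    qed (use u k in auto)
    thus ?thesis using Hge[of M] by simp
  qed
  define u1 where "u1 = (u0 + M) / 2"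
  have u1: "u1 \<in> {u0..M}" "u0 < u1" "u1 < M" using u0M by (auto simp: u1_def)
  define sbar where "sbar = H u1"
  have sbar1: "sbar < 1"
  proof -
    have "0 < c1/(k+1) * (M-u1) powr (k+1)" using c1 k u1 by simp
    thus ?thesis using cmp[OF u1(1)] by (simp add: sbar_def)
  qed
  have sbarz: "0 < sbar"
  proof -
    have "(u1-u0)*\<Phi> u1 \<le> H u1 - H u0" using KI[of u0 u1] u1 u0M by auto
    moreover have "0 < \<Phi> u1" unfolding \<Phi>_def using Rpos[of u1] u1 \<omega> by simp
    moreover have "0 \<le> H u0" using Hnn u0 by simp
    ultimately show ?thesis using u1 unfolding sbar_def by (smt (verit) mult_pos_pos)
  qed
  have hs: "H (h s) = s" if "s \<in> {sbar<..<1}" for s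
    using hh that sbarz unfolding is_height_function_def H_def by auto
  have hloc: "h s \<in> {u1<..<M}" if s: "s \<in> {sbar<..<1}" for s
  proof -
    have "h s < M"
    proof (rule ccontr)
      assume "\<not> h s < M" thus False using Hge[of "h s"] hs[OF s] s by auto
    qed
    moreover have "u1 < h s"
    proof (rule ccontr)
      assume a: "\<not> u1 < h s"
      have "H (h s) \<le> sbar"
      proof (cases "h s < 0")
        case True thus ?thesis using Hneg[OF True] sbarz by simp
      next
        case False thus ?thesis using Hmono[of "h s" u1] a unfolding sbar_def by simp
      qed
      thus False using hs[OF s] s by simp
    qed
    ultimately show ?thesis by simp
  qed
  have Phipos: "0 < \<Phi> v" if "v \<in> {u0<..<M}" for v
    unfolding \<Phi>_def using Rpos[of v] that \<omega> by simp
  have Hstrict: "H v < H w" if "v \<in> {u0..M}" "w \<in> {u0..M}" "v < w" for v w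
  proof (rule DERIV_pos_imp_increasing_open[OF that(3)])
    fix x assume "v < x" "x < w"
    hence x: "x \<in> {u0<..<M}" using that by auto
    show "\<exists>y. (H has_real_derivative y) (at x) \<and> 0 < y" using Hder[OF x] Phipos[OF x] by blast
  next
    show "continuous_on {v..w} H" using Hcont by (rule continuous_on_subset) (use that in auto)
  qed
  have injH: "inj_on H {u1..M}"
  proof (rule inj_onI)
    fix a b assume ab: "a \<in> {u1..M}" "b \<in> {u1..M}" "H a = H b"
    hence "a \<in> {u0..M}" "b \<in> {u0..M}" using u1 by auto
    thus "a = b" using Hstrict[of a b] Hstrict[of b a] ab(3) by (cases a b rule: linorder_cases) auto
  qed
  define G where "G = the_inv_into {u1..M} H"
  have Gcont: "continuous_on (H ` {u1..M}) G"
  proof (rule continuous_on_inv)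
    show "continuous_on {u1..M} H" using Hcont by (rule continuous_on_subset) (use u1 in auto)
    show "\<forall>x\<in>{u1..M}. G (H x) = x" unfolding G_def using the_inv_into_f_f[OF injH] by blast
  qed simp
  have hG: "h y = G y" if "y \<in> {sbar<..<1}" for y
  proof -
    have "h y \<in> {u1..M}" using hloc[OF that] by auto
    hence "G (H (h y)) = h y" unfolding G_def using the_inv_into_f_f[OF injH] by blast
    thus ?thesis using hs[OF that] by simp
  qed
  have sub: "{sbar<..<1} \<subseteq> H ` {u1..M}"
  proof
    fix y assume y: "y \<in> {sbar<..<1}"
    have "h y \<in> {u1..M}" using hloc[OF y] by auto
    thus "y \<in> H ` {u1..M}" using hs[OF y] by (metis image_eqI)
  qed
  have hcont: "continuous_on {sbar<..<1} h"
  proof -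
    have "continuous_on {sbar<..<1} G" using Gcont sub by (rule continuous_on_subset)
    thus ?thesis using hG by (metis continuous_on_cong)
  qed
  define q where "q = k/(k+1)"
  have qe: "- real DIM('a) / (real DIM('a) + 2) = -q"
    unfolding q_def k_def n_def by (simp add: field_simps)
  define cc where "cc = (c1/(k+1)) powr (k/(k+1)) / c2"
  define CC where "CC = (c2/(k+1)) powr (k/(k+1)) / c1"
  have cc: "0 < cc" using c1 c2 k by (simp add: cc_def)
  have CC: "0 < CC" using c1 c2 k by (simp add: CC_def)
  have main: "\<forall>s\<in>{sbar<..<1}. \<exists>D. (h has_real_derivative D) (at s) \<and>
        cc * (1 - s) powr (- real DIM('a) / (real DIM('a) + 2)) \<le> D \<and>
        D \<le> CC * (1 - s) powr (- real DIM('a) / (real DIM('a) + 2))"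
  proof
    fix s assume s: "s \<in> {sbar<..<1}"
    have "\<forall>x\<in>{sbar<..<1}. isCont h x" using continuous_on_eq_continuous_at[of "{sbar<..<1}" h] hcont by simp
    hence ic: "isCont h s" using s by blast
    have u: "h s \<in> {u0<..<M}" "h s \<in> {u0..M}" using hloc[OF s] u1 by auto
    have der: "(h has_real_derivative inverse (\<Phi> (h s))) (at s)"
      by (rule DERIV_inverse_function[OF Hder[OF u(1)] _ _ _ hs ic, of sbar 1])
         (use Phipos[OF u(1)] s in auto)
    have X: "0 < M - h s" using u by simp
    have b1: "c1/(k+1) * (M - h s) powr (k+1) \<le> 1 - s" "1 - s \<le> c2/(k+1) * (M - h s) powr (k+1)"
      using cmp[OF u(2)] hs[OF s] by auto
    have b2: "c1 * (M - h s) powr k \<le> \<Phi> (h s)" "\<Phi> (h s) \<le> c2 * (M - h s) powr k"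
      using Phib[OF u(2)] by auto
    have fa: "(c1/(k+1)) powr (k/(k+1)) / c2 * (1-s) powr (-(k/(k+1))) \<le> inverse (\<Phi> (h s)) \<and>
         inverse (\<Phi> (h s)) \<le> (c2/(k+1)) powr (k/(k+1)) / c1 * (1-s) powr (-(k/(k+1)))"
      by (rule final_arith[OF X c1 c2 k b1 b2])
    show "\<exists>D. (h has_real_derivative D) (at s) \<and>
        cc * (1 - s) powr (- real DIM('a) / (real DIM('a) + 2)) \<le> D \<and>
        D \<le> CC * (1 - s) powr (- real DIM('a) / (real DIM('a) + 2))"
      using der fa unfolding qe q_def cc_def CC_def by blast
  qed
  show ?thesis
    by (rule exI[of _ cc], rule exI[of _ CC], rule exI[of _ sbar]) (use cc CC sbarz sbar1 main in blast)
qed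


theorem lemma4p2:
  fixes \<rho>0 \<rho>1 :: "'a::euclidean_space \<Rightarrow> real" and h0 h1 :: "real \<Rightarrow> real"
  assumes "bounded_prob_density \<rho>0" "bounded_prob_density \<rho>1"
    and "radially_symmetric \<rho>0" "radially_symmetric \<rho>1"
    and "strictly_radially_decreasing \<rho>0" "strictly_radially_decreasing \<rho>1"
    and "C2_on (interior (supp \<rho>0)) \<rho>0" "C2_on (interior (supp \<rho>1)) \<rho>1"
    and "laplacian \<rho>0 0 < 0" "laplacian \<rho>1 0 < 0"
    and "is_height_function \<rho>0 h0" "is_height_function \<rho>1 h1"
  shows "\<exists>c C sbar. 0 < c \<and> 0 < C \<and> 0 < sbar \<and> sbar < 1 \<and>
     (\<forall>t\<in>{0..1}. \<forall>s\<in>{sbar<..<1}. \<exists>D.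
        ((\<lambda>r. (1 - t) * h0 r + t * h1 r) has_real_derivative D) (at s) \<and>
        c * (1 - s) powr (- real DIM('a) / (real DIM('a) + 2)) \<le> D \<and>
        D \<le> C * (1 - s) powr (- real DIM('a) / (real DIM('a) + 2)))"
proof -
  have one: "\<exists>c C sbar. 0 < c \<and> 0 < C \<and> 0 < sbar \<and> sbar < 1 \<and>
     (\<forall>s\<in>{sbar<..<1}. \<exists>D. (h has_real_derivative D) (at s) \<and>
        c * (1 - s) powr (- real DIM('a) / (real DIM('a) + 2)) \<le> D \<and>
        D \<le> C * (1 - s) powr (- real DIM('a) / (real DIM('a) + 2)))"
    if bp: "bounded_prob_density \<rho>" and rs: "radially_symmetric \<rho>"
      and sd: "strictly_radially_decreasing \<rho>" and c2: "C2_on (interior (supp \<rho>)) \<rho>"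
      and lap: "laplacian \<rho> 0 < 0" and hh: "is_height_function \<rho> h"
    for \<rho> :: "'a \<Rightarrow> real" and h
  proof -
    obtain f r0 A B where fr: "0 < r0" "0 < B" "B \<le> A" "\<forall>x. \<rho> x = f (norm x)"
      "continuous_on {0..r0} f" "\<forall>r\<in>{0..r0}. f 0 - A*r^2 \<le> f r \<and> f r \<le> f 0 - B*r^2"
      "0 < f r0" "\<forall>a b. 0 \<le> a \<longrightarrow> a < b \<longrightarrow> 0 < f b \<longrightarrow> f b < f a" "\<forall>r. 0 \<le> f r"
      using profile[OF bp rs sd c2 lap] by blast
    show ?thesis
      apply (rule single[where \<rho>=\<rho> and f=f and rz=r0 and A=A and B=B and h=h])
      using fr hh bp by (simp_all add: bounded_prob_density_def)
  qed
  obtain c0 C0 s0 where A0: "0 < c0" "0 < C0" "0 < s0" "s0 < 1"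
    "\<forall>s\<in>{s0<..<1}. \<exists>D. (h0 has_real_derivative D) (at s) \<and>
        c0 * (1 - s) powr (- real DIM('a) / (real DIM('a) + 2)) \<le> D \<and>
        D \<le> C0 * (1 - s) powr (- real DIM('a) / (real DIM('a) + 2))"
    using one[OF assms(1,3,5,7,9,11)] by blast
  obtain c1 C1 s1 where A1: "0 < c1" "0 < C1" "0 < s1" "s1 < 1"
    "\<forall>s\<in>{s1<..<1}. \<exists>D. (h1 has_real_derivative D) (at s) \<and>
        c1 * (1 - s) powr (- real DIM('a) / (real DIM('a) + 2)) \<le> D \<and>
        D \<le> C1 * (1 - s) powr (- real DIM('a) / (real DIM('a) + 2))"
    using one[OF assms(2,4,6,8,10,12)] by blast
  define c where "c = min c0 c1"
  define C where "C = max C0 C1"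
  define sb where "sb = max s0 s1"
  have main: "\<forall>t\<in>{0..1}. \<forall>s\<in>{sb<..<1}. \<exists>D.
        ((\<lambda>r. (1 - t) * h0 r + t * h1 r) has_real_derivative D) (at s) \<and>
        c * (1 - s) powr (- real DIM('a) / (real DIM('a) + 2)) \<le> D \<and>
        D \<le> C * (1 - s) powr (- real DIM('a) / (real DIM('a) + 2))"
  proof (intro ballI)
    fix t s :: real assume t: "t \<in> {0..1}" and s: "s \<in> {sb<..<1}"
    define P where "P = (1 - s) powr (- real DIM('a) / (real DIM('a) + 2))"
    have P: "0 \<le> P" by (simp add: P_def)
    obtain D0 where D0: "(h0 has_real_derivative D0) (at s)" "c0 * P \<le> D0" "D0 \<le> C0 * P"
    proof -
      have "s \<in> {s0<..<1}" using s by (auto simp: sb_def)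
      from A0(5)[rule_format, OF this] show ?thesis using that unfolding P_def by blast
    qed
    obtain D1 where D1: "(h1 has_real_derivative D1) (at s)" "c1 * P \<le> D1" "D1 \<le> C1 * P"
    proof -
      have "s \<in> {s1<..<1}" using s by (auto simp: sb_def)
      from A1(5)[rule_format, OF this] show ?thesis using that unfolding P_def by blast
    qed
    have der: "((\<lambda>r. (1 - t) * h0 r + t * h1 r) has_real_derivative (1-t)*D0 + t*D1) (at s)"
      by (intro DERIV_add DERIV_cmult D0(1) D1(1))
    have "c * P \<le> c0 * P" "c * P \<le> c1 * P" "C0 * P \<le> C * P" "C1 * P \<le> C * P"
      using P by (auto intro!: mult_right_mono simp: c_def C_def)
    hence "c * P \<le> D0" "c * P \<le> D1" "D0 \<le> C * P" "D1 \<le> C * P"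
      using D0 D1 by linarith+
    hence "(1-t)*(c*P) \<le> (1-t)*D0" "t*(c*P) \<le> t*D1" "(1-t)*D0 \<le> (1-t)*(C*P)" "t*D1 \<le> t*(C*P)"
      using t by (auto intro: mult_left_mono)
    hence "c * P \<le> (1-t)*D0 + t*D1" "(1-t)*D0 + t*D1 \<le> C * P" by (simp_all add: algebra_simps)
    thus "\<exists>D. ((\<lambda>r. (1 - t) * h0 r + t * h1 r) has_real_derivative D) (at s) \<and>
        c * (1 - s) powr (- real DIM('a) / (real DIM('a) + 2)) \<le> D \<and>
        D \<le> C * (1 - s) powr (- real DIM('a) / (real DIM('a) + 2))"
      using der unfolding P_def by blast
  qed
  have "0 < c" "0 < C" "0 < sb" "sb < 1" using A0 A1 by (auto simp: c_def C_def sb_def)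
  thus ?thesis using main by blast
qed

end
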